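(* Let $T_k=M_1M_2\cdots M_k$. Then $\delta(T_k)$ converges to $0$ almost surely as $k\to\infty$.
   Context: Let $\mathcal{G}=(\mathcal{V},\mathcal{E})$ be a strongly connected directed graph with $\mathcal{V}=\{1,\dots,m\}$, with a self-loop $(i,i)\in\mathcal{E}$ at every node. Let $\mathcal{O}_i=\{j:(i,j)\in\mathcal{E}\}$ and $D_i=|\mathcal{O}_i|$. At each time step $k\ge1$ each link $(i,j)\in\mathcal{E}$ is reliable with probability $q_{ij}\in(0,1]$, independently across links and across time steps; let $X_k[i,j]=1$ if $(i,j)$ is reliable at step $k$ and $0$ otherwise. Let $n=m+|\mathcal{E}|$ and index rows/columns of $n\times n$ matrices by $\mathcal{V}\cup\mathcal{E}$. The random matrix $M_k$ is defined by: for $i\in\mathcal{V}$ and $(i,j)\in\mathcal{E}$, $M_k[i,j]=X_k[i,j]/D_i$ and $M_k[i,(i,j)]=(1-X_k[i,j])/D_i$, all other entries of row $i$ being $0$; for $(i,j)\in\mathcal{E}$, $M_k[(i,j),j]=X_k[i,j]$ and $M_k[(i,j),(i,j)]=1-X_k[i,j]$, all other entries of row $(i,j)$ being $0$. For a row stochastic matrix $A$, $\delta(A)=\max_j\max_{i_1,i_2}|A[i_1,j]-A[i_2,j]|$. *)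

theory Defs
  imports "HOL-Probability.Probability"
begin

text \<open>Nodes are the elements of a finite type 'v (playing the role of {1..m});
  links are the pairs in E.  Rows/columns of the n x n matrices are indexed by
  the set  idx E = Inl ` UNIV \<union> Inr ` E  (i.e. V \<union> E).
  Matrices are functions idx \<Rightarrow> idx \<Rightarrow> real, only meaningful on idx E.
  A realization of the link states at step k is x k :: 'v \<times> 'v \<Rightarrow> bool.\<close>

type_synonym 'v ix = "'v + ('v \<times> 'v)"

definition idx :: "('v \<times> 'v) set \<Rightarrow> 'v ix set" where
  "idx E = range Inl \<union> Inr ` E"

definition outdeg :: "('v \<times> 'v) set \<Rightarrow> 'v \<Rightarrow> nat" where
  "outdeg E i = card {j. (i, j) \<in> E}"

definition Mmat :: "('v \<times> 'v) set \<Rightarrow> ('v \<times> 'v \<Rightarrow> bool) \<Rightarrow> 'v ix \<Rightarrow> 'v ix \<Rightarrow> real" where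
  "Mmat E x a b = (case (a, b) of
      (Inl i, Inl j) \<Rightarrow> (if (i, j) \<in> E then of_bool (x (i, j)) / real (outdeg E i) else 0)
    | (Inl i, Inr (i', j)) \<Rightarrow> (if (i', j) \<in> E \<and> i' = i then (1 - of_bool (x (i, j))) / real (outdeg E i) else 0)
    | (Inr (i, j), Inl j') \<Rightarrow> (if (i, j) \<in> E \<and> j' = j then of_bool (x (i, j)) else 0)
    | (Inr e, Inr e') \<Rightarrow> (if e \<in> E \<and> e' = e then 1 - of_bool (x e) else 0))"

definition mat_mult :: "'a set \<Rightarrow> ('a \<Rightarrow> 'a \<Rightarrow> real) \<Rightarrow> ('a \<Rightarrow> 'a \<Rightarrow> real) \<Rightarrow> 'a \<Rightarrow> 'a \<Rightarrow> real" where
  "mat_mult I A B = (\<lambda>a c. \<Sum>b\<in>I. A a b * B b c)"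

fun Tprod :: "('v \<times> 'v) set \<Rightarrow> (nat \<Rightarrow> 'v \<times> 'v \<Rightarrow> bool) \<Rightarrow> nat \<Rightarrow> 'v ix \<Rightarrow> 'v ix \<Rightarrow> real" where
  "Tprod E x 0 = (\<lambda>a b. of_bool (a = b))"
| "Tprod E x (Suc k) = mat_mult (idx E) (Tprod E x k) (Mmat E (x (Suc k)))"

definition delta :: "'a set \<Rightarrow> ('a \<Rightarrow> 'a \<Rightarrow> real) \<Rightarrow> real" where
  "delta I A = Max {\<bar>A i1 j - A i2 j\<bar> | i1 i2 j. i1 \<in> I \<and> i2 \<in> I \<and> j \<in> I}"

end

theory Submission
  imports Defs
begin

definition stoch :: "'a set \<Rightarrow> ('a \<Rightarrow> 'a \<Rightarrow> real) \<Rightarrow> bool" where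
  "stoch I A \<longleftrightarrow> (\<forall>a\<in>I. \<forall>b\<in>I. 0 \<le> A a b) \<and> (\<forall>a\<in>I. (\<Sum>b\<in>I. A a b) = 1)"

definition sig :: "'a set \<Rightarrow> ('a \<Rightarrow> 'a \<Rightarrow> real) \<Rightarrow> real" where
  "sig I A = Max ((\<lambda>(i1,i2). \<Sum>j\<in>I. \<bar>A i1 j - A i2 j\<bar>) ` (I \<times> I))"

fun Tp :: "('v \<times> 'v) set \<Rightarrow> (nat \<Rightarrow> 'v \<times> 'v \<Rightarrow> bool) \<Rightarrow> nat \<Rightarrow> nat \<Rightarrow> 'v ix \<Rightarrow> 'v ix \<Rightarrow> real" where
  "Tp E x a 0 = (\<lambda>a b. of_bool (a = b))"
| "Tp E x a (Suc n) = mat_mult (idx E) (Tp E x a n) (Mmat E (x (a + Suc n)))"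

lemma Tprod_Tp: "Tprod E x k = Tp E x 0 k"
  by (induction k) auto

lemma mat_mult_assoc:
  assumes "finite I"
  shows "mat_mult I (mat_mult I A B) C = mat_mult I A (mat_mult I B C)"
  unfolding mat_mult_def
proof (intro ext)
  fix a c
  have "(\<Sum>b\<in>I. (\<Sum>d\<in>I. A a d * B d b) * C b c) = (\<Sum>b\<in>I. \<Sum>d\<in>I. A a d * (B d b * C b c))"
    by (simp add: sum_distrib_right mult.assoc)
  also have "\<dots> = (\<Sum>d\<in>I. \<Sum>b\<in>I. A a d * (B d b * C b c))"
    by (rule sum.swap)
  also have "\<dots> = (\<Sum>d\<in>I. A a d * (\<Sum>b\<in>I. B d b * C b c))"
    by (simp add: sum_distrib_left)
  finally show "(\<Sum>b\<in>I. (\<Sum>d\<in>I. A a d * B d b) * C b c) = (\<Sum>d\<in>I. A a d * (\<Sum>b\<in>I. B d b * C b c))" .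
qed

lemma finite_idx: "finite (idx (E::('v::finite \<times> 'v) set))"
  by simp

lemma Tp_split:
  fixes E :: "('v::finite \<times> 'v) set"
  assumes "c \<in> idx E"
  shows "Tp E x a (b+n) r c = mat_mult (idx E) (Tp E x a b) (Tp E x (a+b) n) r c"
  using assms
proof (induction n arbitrary: c)
  case 0
  have "mat_mult (idx E) (Tp E x a b) (Tp E x (a+b) 0) r c = (\<Sum>d\<in>idx E. (if d = c then Tp E x a b r d else 0))"
    unfolding mat_mult_def by (intro sum.cong) auto
  also have "\<dots> = Tp E x a b r c" using 0 by simp
  finally show ?case by simp
next
  case (Suc n)
  let ?M = "Mmat E (x (a + Suc (b+n)))"
  have "Tp E x a (b + Suc n) r c = (\<Sum>d\<in>idx E. Tp E x a (b+n) r d * ?M d c)"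
    by (simp add: mat_mult_def)
  also have "\<dots> = (\<Sum>d\<in>idx E. mat_mult (idx E) (Tp E x a b) (Tp E x (a+b) n) r d * ?M d c)"
    using Suc.IH by (intro sum.cong) auto
  also have "\<dots> = mat_mult (idx E) (mat_mult (idx E) (Tp E x a b) (Tp E x (a+b) n)) ?M r c"
    by (simp add: mat_mult_def)
  also have "\<dots> = mat_mult (idx E) (Tp E x a b) (mat_mult (idx E) (Tp E x (a+b) n) ?M) r c"
    by (simp add: mat_mult_assoc)
  also have "mat_mult (idx E) (Tp E x (a+b) n) ?M = Tp E x (a+b) (Suc n)"
    by (simp add: add.assoc)
  finally show ?case .
qed

lemma stoch_mult:
  assumes "finite I" "stoch I A" "stoch I B"
  shows "stoch I (mat_mult I A B)"
proof -
  have nn: "0 \<le> mat_mult I A B a c" if "a \<in> I" "c \<in> I" for a c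
    using assms that unfolding stoch_def mat_mult_def by (auto intro!: sum_nonneg)
  have "(\<Sum>c\<in>I. mat_mult I A B a c) = 1" if "a \<in> I" for a
  proof -
    have "(\<Sum>c\<in>I. mat_mult I A B a c) = (\<Sum>b\<in>I. A a b * (\<Sum>c\<in>I. B b c))"
      unfolding mat_mult_def sum_distrib_left by (rule sum.swap)
    also have "\<dots> = (\<Sum>b\<in>I. A a b)" using assms(3) unfolding stoch_def by simp
    finally show ?thesis using assms(2) that unfolding stoch_def by simp
  qed
  with nn show ?thesis unfolding stoch_def by auto
qed


lemma stoch_id:
  assumes "finite I" shows "stoch I (\<lambda>a b. of_bool (a = b))"
  unfolding stoch_def
proof (intro conjI ballI)
  fix a assume "a \<in> I"
  have "(\<Sum>b\<in>I. of_bool (a = b) :: real) = (\<Sum>b\<in>I. if b = a then 1 else 0)"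
    by (intro sum.cong) auto
  also have "\<dots> = 1" using \<open>a \<in> I\<close> assms by simp
  finally show "(\<Sum>b\<in>I. of_bool (a = b) :: real) = 1" .
qed auto

lemma sum_idx:
  fixes E :: "('v::finite \<times> 'v) set"
  shows "(\<Sum>b\<in>idx E. f b) = (\<Sum>j\<in>UNIV. f (Inl j)) + (\<Sum>e\<in>E. f (Inr e))"
proof -
  have "(\<Sum>b\<in>idx E. f b) = (\<Sum>b\<in>range Inl. f b) + (\<Sum>b\<in>Inr ` E. f b)"
    unfolding idx_def by (rule sum.union_disjoint) auto
  also have "(\<Sum>b\<in>range Inl. f b) = (\<Sum>j\<in>UNIV. f (Inl j))"
    by (simp add: sum.reindex)
  also have "(\<Sum>b\<in>Inr ` E. f b) = (\<Sum>e\<in>E. f (Inr e))"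
    by (simp add: sum.reindex)
  finally show ?thesis .
qed

lemma outdeg_pos:
  fixes E :: "('v::finite \<times> 'v) set"
  assumes "(i, i) \<in> E"
  shows "outdeg E i > 0"
  unfolding outdeg_def using assms by (auto simp: card_gt_0_iff)

lemma Mmat_nonneg: "0 \<le> Mmat E x a b"
  unfolding Mmat_def by (auto split: sum.splits prod.splits)

lemma stoch_Mmat:
  fixes E :: "('v::finite \<times> 'v) set"
  assumes loops: "\<forall>i. (i, i) \<in> E"
  shows "stoch (idx E) (Mmat E x)"
  unfolding stoch_def
proof (intro conjI ballI Mmat_nonneg)
  fix r assume r: "r \<in> idx E"
  show "(\<Sum>b\<in>idx E. Mmat E x r b) = 1"
  proof (cases r)
    case (Inl i)
    define S where "S = {e \<in> E. fst e = i}"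
    define D where "D = real (outdeg E i)"
    have D: "D > 0" using outdeg_pos[of i E] loops by (simp add: D_def)
    have S: "S = Pair i ` {j. (i,j) \<in> E}" unfolding S_def by force
    have cardS: "card S = outdeg E i" unfolding S outdeg_def
      by (rule card_image) (auto simp: inj_on_def)
    have 1: "(\<Sum>j\<in>UNIV. Mmat E x r (Inl j)) = (\<Sum>e\<in>S. of_bool (x e) / D)"
    proof -
      have "(\<Sum>j\<in>UNIV. Mmat E x r (Inl j)) = (\<Sum>j\<in>{j. (i,j) \<in> E}. of_bool (x (i,j)) / D)"
        by (rule sum.mono_neutral_cong_right) (auto simp: Inl Mmat_def D_def)
      also have "\<dots> = (\<Sum>e\<in>S. of_bool (x e) / D)"
        unfolding S by (simp add: sum.reindex inj_on_def)
      finally show ?thesis .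
    qed
    have 2: "(\<Sum>e\<in>E. Mmat E x r (Inr e)) = (\<Sum>e\<in>S. (1 - of_bool (x e)) / D)"
      by (rule sum.mono_neutral_cong_right) (auto simp: Inl Mmat_def D_def S_def split: if_splits)
    have "(\<Sum>b\<in>idx E. Mmat E x r b) = (\<Sum>e\<in>S. of_bool (x e) / D + (1 - of_bool (x e)) / D)"
      by (simp add: sum_idx 1 2 sum.distrib)
    also have "\<dots> = (\<Sum>e\<in>S. 1 / D)"
      using D by (intro sum.cong) (auto simp: field_simps)
    also have "\<dots> = 1" using D cardS by (simp add: D_def)
    finally show ?thesis .
  next
    case (Inr e)
    obtain i j where e: "e = (i, j)" by force
    have eE: "(i,j) \<in> E" using r Inr e unfolding idx_def by auto
    have 1: "(\<Sum>k\<in>UNIV. Mmat E x r (Inl k)) = of_bool (x (i,j))"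
      by (subst sum.remove[of _ j]) (auto simp: Inr e eE Mmat_def)
    have 2: "(\<Sum>e'\<in>E. Mmat E x r (Inr e')) = 1 - of_bool (x (i,j))"
      by (subst sum.remove[of _ "(i,j)"]) (auto simp: Inr e eE Mmat_def)
    show ?thesis by (simp add: sum_idx 1 2)
  qed
qed

lemma stoch_Tp:
  fixes E :: "('v::finite \<times> 'v) set"
  assumes loops: "\<forall>i. (i, i) \<in> E"
  shows "stoch (idx E) (Tp E x a n)"
  by (induction n) (auto intro!: stoch_mult stoch_id stoch_Mmat loops)

lemma sig_ge:
  assumes "finite I" "i1 \<in> I" "i2 \<in> I"
  shows "(\<Sum>j\<in>I. \<bar>A i1 j - A i2 j\<bar>) \<le> sig I A"
  unfolding sig_def using assms by (intro Max_ge) force+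

lemma sig_le:
  assumes "finite I" "I \<noteq> {}" "\<And>i1 i2. i1 \<in> I \<Longrightarrow> i2 \<in> I \<Longrightarrow> (\<Sum>j\<in>I. \<bar>A i1 j - A i2 j\<bar>) \<le> r"
  shows "sig I A \<le> r"
  unfolding sig_def using assms by (subst Max_le_iff) auto

lemma sig_nonneg:
  assumes "finite I" "I \<noteq> {}"
  shows "0 \<le> sig I A"
proof -
  obtain i where "i \<in> I" using assms by auto
  have "0 \<le> (\<Sum>j\<in>I. \<bar>A i j - A i j\<bar>)" by simp
  also have "\<dots> \<le> sig I A" using sig_ge[OF assms(1) \<open>i\<in>I\<close> \<open>i\<in>I\<close>] .
  finally show ?thesis .
qed

lemma delta_le_sig:
  assumes "finite I" "I \<noteq> {}"
  shows "delta I A \<le> sig I A"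
proof -
  have eq: "{\<bar>A i1 j - A i2 j\<bar> | i1 i2 j. i1 \<in> I \<and> i2 \<in> I \<and> j \<in> I}
     = (\<lambda>(i1,i2,j). \<bar>A i1 j - A i2 j\<bar>) ` (I \<times> I \<times> I)" by force
  show ?thesis unfolding delta_def eq
  proof (rule Max.boundedI)
    show "\<And>a. a\<in>(\<lambda>(i1,i2,j). \<bar>A i1 j - A i2 j\<bar>) ` (I \<times> I \<times> I) \<Longrightarrow> a \<le> sig I A"
    proof safe
      fix i1 i2 j assume h: "i1 \<in> I" "i2 \<in> I" "j \<in> I"
      have "\<bar>A i1 j - A i2 j\<bar> \<le> (\<Sum>j\<in>I. \<bar>A i1 j - A i2 j\<bar>)"
        using h assms by (intro member_le_sum) auto
      also have "\<dots> \<le> sig I A" using sig_ge[OF assms(1) h(1,2)] .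
      finally show "\<bar>A i1 j - A i2 j\<bar> \<le> sig I A" .
    qed
  qed (use assms in auto)
qed

lemma delta_nonneg:
  assumes "finite I" "I \<noteq> {}"
  shows "0 \<le> delta I A"
proof -
  have eq: "{\<bar>A i1 j - A i2 j\<bar> | i1 i2 j. i1 \<in> I \<and> i2 \<in> I \<and> j \<in> I}
     = (\<lambda>(i1,i2,j). \<bar>A i1 j - A i2 j\<bar>) ` (I \<times> I \<times> I)" by force
  obtain i where i: "i \<in> I" using assms by auto
  show ?thesis unfolding delta_def eq
    by (rule order.trans[OF _ Max_ge[where x = "\<bar>A i i - A i i\<bar>"]]) (use assms i in force)+
qed

lemma abs_mid: "(w::real) \<le> M \<Longrightarrow> m \<le> w \<Longrightarrow> \<bar>w - (M+m)/2\<bar> \<le> (M - m)/2"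
  by (simp add: abs_le_iff field_simps)

lemma contract:
  fixes u :: "'a \<Rightarrow> real"
  assumes fin: "finite I" and ne: "I \<noteq> {}" and u0: "(\<Sum>b\<in>I. u b) = 0"
  shows "(\<Sum>j\<in>I. \<bar>\<Sum>b\<in>I. u b * A b j\<bar>) \<le> sig I A / 2 * (\<Sum>b\<in>I. \<bar>u b\<bar>)"
proof -
  define v where "v j = (\<Sum>b\<in>I. u b * A b j)" for j
  define w where "w b = (\<Sum>j\<in>I. sgn (v j) * A b j)" for b
  define Mx where "Mx = Max (w ` I)"
  define mn where "mn = Min (w ` I)"
  define m0 where "m0 = (Mx + mn) / 2"
  have "(\<Sum>j\<in>I. \<bar>v j\<bar>) = (\<Sum>j\<in>I. sgn (v j) * v j)"
    by (intro sum.cong) (auto simp: abs_sgn)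
  also have "\<dots> = (\<Sum>j\<in>I. \<Sum>b\<in>I. u b * (sgn (v j) * A b j))"
    unfolding v_def sum_distrib_left by (intro sum.cong) (auto simp: algebra_simps)
  also have "\<dots> = (\<Sum>b\<in>I. \<Sum>j\<in>I. u b * (sgn (v j) * A b j))"
    by (rule sum.swap)
  also have "\<dots> = (\<Sum>b\<in>I. u b * w b)"
    unfolding w_def sum_distrib_left ..
  also have "\<dots> = (\<Sum>b\<in>I. u b * (w b - m0))"
  proof -
    have "(\<Sum>b\<in>I. u b * (w b - m0)) = (\<Sum>b\<in>I. u b * w b) - (\<Sum>b\<in>I. u b) * m0"
      by (simp add: algebra_simps sum_subtractf sum_distrib_right sum_distrib_left)
    then show ?thesis using u0 by simp
  qed
  also have "\<dots> \<le> (\<Sum>b\<in>I. \<bar>u b\<bar> * ((Mx - mn) / 2))"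
  proof (rule sum_mono)
    fix b assume b: "b \<in> I"
    have "w b \<le> Mx" "mn \<le> w b" using b fin unfolding Mx_def mn_def by auto
    then have "\<bar>w b - m0\<bar> \<le> (Mx - mn) / 2" unfolding m0_def by (rule abs_mid)
    then have "\<bar>u b\<bar> * \<bar>w b - m0\<bar> \<le> \<bar>u b\<bar> * ((Mx - mn) / 2)"
      by (intro mult_left_mono) auto
    moreover have "u b * (w b - m0) \<le> \<bar>u b\<bar> * \<bar>w b - m0\<bar>"
      by (metis abs_ge_self abs_mult)
    ultimately show "u b * (w b - m0) \<le> \<bar>u b\<bar> * ((Mx - mn) / 2)" by linarith
  qed
  also have "\<dots> \<le> (\<Sum>b\<in>I. \<bar>u b\<bar> * (sig I A / 2))"
  proof (rule sum_mono)
    fix b assume b: "b \<in> I"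
    have "Mx \<in> w ` I" unfolding Mx_def using fin ne by (intro Max_in) auto
    then obtain b1 where b1: "b1 \<in> I" "Mx = w b1" by auto
    have "mn \<in> w ` I" unfolding mn_def using fin ne by (intro Min_in) auto
    then obtain b2 where b2: "b2 \<in> I" "mn = w b2" by auto
    have "Mx - mn = (\<Sum>j\<in>I. sgn (v j) * (A b1 j - A b2 j))"
      unfolding b1 b2 w_def by (simp add: sum_subtractf algebra_simps)
    also have "\<dots> \<le> (\<Sum>j\<in>I. \<bar>A b1 j - A b2 j\<bar>)"
    proof (rule sum_mono)
      fix j
      have "sgn (v j) * (A b1 j - A b2 j) \<le> \<bar>sgn (v j) * (A b1 j - A b2 j)\<bar>" by simp
      also have "\<dots> \<le> \<bar>A b1 j - A b2 j\<bar>"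
        by (auto simp: abs_mult sgn_real_def)
      finally show "sgn (v j) * (A b1 j - A b2 j) \<le> \<bar>A b1 j - A b2 j\<bar>" .
    qed
    also have "\<dots> \<le> sig I A" using sig_ge[OF fin b1(1) b2(1)] .
    finally show "\<bar>u b\<bar> * ((Mx - mn) / 2) \<le> \<bar>u b\<bar> * (sig I A / 2)"
      by (intro mult_left_mono) auto
  qed
  also have "\<dots> = sig I A / 2 * (\<Sum>b\<in>I. \<bar>u b\<bar>)"
    by (subst sum_distrib_right[symmetric]) (rule mult.commute)
  finally show ?thesis unfolding v_def .
qed

lemma sig_mult:
  assumes fin: "finite I" and ne: "I \<noteq> {}" and T: "stoch I T"
  shows "sig I (mat_mult I T B) \<le> sig I T * sig I B / 2"
proof (rule sig_le[OF fin ne])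
  fix i1 i2 assume i: "i1 \<in> I" "i2 \<in> I"
  define u where "u b = T i1 b - T i2 b" for b
  have u0: "(\<Sum>b\<in>I. u b) = 0" using T i unfolding u_def stoch_def by (simp add: sum_subtractf)
  have "(\<Sum>j\<in>I. \<bar>mat_mult I T B i1 j - mat_mult I T B i2 j\<bar>) = (\<Sum>j\<in>I. \<bar>\<Sum>b\<in>I. u b * B b j\<bar>)"
    unfolding mat_mult_def u_def by (simp add: sum_subtractf left_diff_distrib)
  also have "\<dots> \<le> sig I B / 2 * (\<Sum>b\<in>I. \<bar>u b\<bar>)" by (rule contract[OF fin ne u0])
  also have "\<dots> \<le> sig I B / 2 * sig I T"
    using sig_ge[OF fin i, of T] sig_nonneg[OF fin ne, of B] unfolding u_def
    by (intro mult_left_mono) auto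
  finally show "(\<Sum>j\<in>I. \<bar>mat_mult I T B i1 j - mat_mult I T B i2 j\<bar>) \<le> sig I T * sig I B / 2"
    by (simp add: mult.commute)
qed

lemma sig_stoch_le:
  assumes fin: "finite I" and ne: "I \<noteq> {}" and B: "stoch I B" and j0: "j0 \<in> I"
    and col: "\<And>a. a \<in> I \<Longrightarrow> c \<le> B a j0"
  shows "sig I B \<le> 2 - 2 * c"
proof (rule sig_le[OF fin ne])
  fix i1 i2 assume i: "i1 \<in> I" "i2 \<in> I"
  have "(\<Sum>j\<in>I. \<bar>B i1 j - B i2 j\<bar>) = (\<Sum>j\<in>I. B i1 j + B i2 j - 2 * min (B i1 j) (B i2 j))"
    by (intro sum.cong) auto
  also have "\<dots> = 2 - 2 * (\<Sum>j\<in>I. min (B i1 j) (B i2 j))"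
    using B i unfolding stoch_def by (simp add: sum_subtractf sum.distrib sum_distrib_left)
  also have "\<dots> \<le> 2 - 2 * c"
  proof -
    have "c \<le> min (B i1 j0) (B i2 j0)" using col i by auto
    also have "\<dots> \<le> (\<Sum>j\<in>I. min (B i1 j) (B i2 j))"
      using B i j0 fin unfolding stoch_def by (intro member_le_sum) auto
    finally show ?thesis by simp
  qed
  finally show "(\<Sum>j\<in>I. \<bar>B i1 j - B i2 j\<bar>) \<le> 2 - 2 * c" .
qed

lemma sig_stoch_le2:
  assumes fin: "finite I" and ne: "I \<noteq> {}" and B: "stoch I B"
  shows "sig I B \<le> 2"
proof -
  obtain j0 where "j0 \<in> I" using ne by auto
  then show ?thesis using sig_stoch_le[OF fin ne B, of j0 0] B unfolding stoch_def by auto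
qed

lemma Mmat_true:
  assumes "\<forall>e\<in>E. x e"
  shows "Mmat E x = Mmat E (\<lambda>_. True)"
  using assms unfolding Mmat_def by (intro ext) (auto split: sum.splits prod.splits)

lemma Tp_good:
  assumes "\<forall>t\<in>{1..n}. \<forall>e\<in>E. x (a+t) e"
  shows "Tp E x a n = Tp E (\<lambda>_ _. True) 0 n"
  using assms
proof (induction n)
  case 0 then show ?case by simp
next
  case (Suc n)
  have "Mmat E (x (a + Suc n)) = Mmat E (\<lambda>_. True)"
  proof (intro Mmat_true ballI)
    fix e assume "e \<in> E"
    moreover have "Suc n \<in> {1..Suc n}" by simp
    ultimately show "x (a + Suc n) e" using Suc.prems by blast
  qed
  with Suc show ?case by simp
qed

lemma Tp_true_shift: "Tp E (\<lambda>_ _. True) a n = Tp E (\<lambda>_ _. True) 0 n"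
  by (induction n) auto

lemma Tp_nonneg: "0 \<le> Tp E x a n r c"
proof (induction n arbitrary: c)
  case 0 then show ?case by simp
next
  case (Suc n) then show ?case
    by (auto simp: mat_mult_def intro!: sum_nonneg mult_nonneg_nonneg Mmat_nonneg)
qed

lemma mat_mult_ge_term:
  assumes "finite I" "d \<in> I" "\<And>b. b \<in> I \<Longrightarrow> 0 \<le> A a b * B b c"
  shows "A a d * B d c \<le> mat_mult I A B a c"
  unfolding mat_mult_def using assms by (intro member_le_sum) auto

lemma walk_pos:
  fixes E :: "('v::finite \<times> 'v) set"
  assumes loops: "\<forall>i. (i, i) \<in> E"
  shows "(i, j) \<in> E ^^ n \<Longrightarrow> 0 < Tp E (\<lambda>_ _. True) 0 n (Inl i) (Inl j)"
proof (induction n arbitrary: j)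
  case 0 then show ?case by simp
next
  case (Suc n)
  then obtain y where y: "(i, y) \<in> E ^^ n" "(y, j) \<in> E" by auto
  have p1: "0 < Tp E (\<lambda>_ _. True) 0 n (Inl i) (Inl y)" using Suc.IH y by auto
  have p2: "0 < Mmat E (\<lambda>_. True) (Inl y) (Inl j)"
    using y outdeg_pos[of y E] loops by (simp add: Mmat_def)
  have "0 < Tp E (\<lambda>_ _. True) 0 n (Inl i) (Inl y) * Mmat E (\<lambda>_. True) (Inl y) (Inl j)"
    using p1 p2 by simp
  also have "\<dots> \<le> Tp E (\<lambda>_ _. True) 0 (Suc n) (Inl i) (Inl j)"
    unfolding Tp.simps
    by (rule mat_mult_ge_term) (auto simp: idx_def intro!: mult_nonneg_nonneg Tp_nonneg Mmat_nonneg)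
  finally show ?case .
qed

lemma relpow_pad:
  assumes loops: "\<forall>i. (i, i) \<in> E"
  shows "(i, j) \<in> E ^^ n \<Longrightarrow> (i, j) \<in> E ^^ (n + k)"
proof (induction k)
  case 0 then show ?case by simp
next
  case (Suc k)
  then have "(i, j) \<in> E ^^ (n + k) O E" using loops by blast
  then show ?case by simp
qed

lemma good_block_exists:
  fixes E :: "('v::finite \<times> 'v) set"
  assumes loops: "\<forall>i. (i, i) \<in> E"
    and sc: "\<forall>i j. (i, j) \<in> E\<^sup>+"
  shows "\<exists>L c. 0 < L \<and> 0 < c \<and> c \<le> 1 \<and>
     (\<forall>x a. (\<forall>t\<in>{1..L}. \<forall>e\<in>E. x (a+t) e) \<longrightarrow> sig (idx E) (Tp E x a L) \<le> 2 - 2 * c)"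
proof -
  define v0 :: 'v where "v0 = undefined"
  have "\<forall>i. \<exists>n>0. (i, v0) \<in> E ^^ n" using sc by (simp add: trancl_power)
  then obtain nf where nf: "\<And>i. (i, v0) \<in> E ^^ nf i" by metis
  define N where "N = Max (range nf)"
  have pathN: "(i, v0) \<in> E ^^ N" for i
  proof -
    have "nf i \<le> N" unfolding N_def by (rule Max_ge) auto
    then obtain k where "N = nf i + k" using le_Suc_ex by blast
    then show ?thesis using relpow_pad[OF loops nf[of i]] by simp
  qed
  define L where "L = Suc N"
  define Q where "Q = Tp E (\<lambda>_ _. True) 0 L"
  have fin: "finite (idx E)" by simp
  have Qpos: "0 < Q r (Inl v0)" if r: "r \<in> idx E" for r
  proof (cases r)
    case (Inl i)
    have "(i, v0) \<in> E ^^ (N + 1)" by (rule relpow_pad[OF loops pathN])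
    then have "(i, v0) \<in> E ^^ (Suc N)" by simp
    then show ?thesis unfolding Q_def Inl L_def by (rule walk_pos[OF loops])
  next
    case (Inr e)
    obtain i j where e: "e = (i, j)" by force
    have eE: "(i, j) \<in> E" using r Inr e unfolding idx_def by auto
    have jI: "Inl j \<in> idx E" "Inl v0 \<in> idx E" unfolding idx_def by auto
    have Q1: "Tp E (\<lambda>_ _. True) 0 1 r (Inl j) = 1"
    proof -
      have "Tp E (\<lambda>_ _. True) 0 1 r (Inl j) = (\<Sum>d\<in>idx E. (if d = r then Mmat E (\<lambda>_. True) d (Inl j) else 0))"
        by (simp add: mat_mult_def)
      also have "\<dots> = Mmat E (\<lambda>_. True) r (Inl j)" using r fin by simp
      also have "\<dots> = 1" using eE by (simp add: Inr e Mmat_def)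
      finally show ?thesis .
    qed
    have "0 < Tp E (\<lambda>_ _. True) 0 1 r (Inl j) * Tp E (\<lambda>_ _. True) 1 N (Inl j) (Inl v0)"
      using Q1 walk_pos[OF loops pathN] by (simp add: Tp_true_shift[of E "Suc 0" N])
    also have "\<dots> \<le> mat_mult (idx E) (Tp E (\<lambda>_ _. True) 0 1) (Tp E (\<lambda>_ _. True) 1 N) r (Inl v0)"
      by (rule mat_mult_ge_term) (use jI in \<open>auto intro!: mult_nonneg_nonneg Tp_nonneg simp del: Tp.simps\<close>)
    also have "\<dots> = Q r (Inl v0)"
      unfolding Q_def L_def using Tp_split[OF jI(2), of "\<lambda>_ _. True" 0 1 N r] by simp
    finally show ?thesis .
  qed
  define c where "c = Min ((\<lambda>r. Q r (Inl v0)) ` idx E)"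
  have ne: "idx E \<noteq> {}" unfolding idx_def by auto
  have c_le: "c \<le> Q r (Inl v0)" if "r \<in> idx E" for r
    unfolding c_def using fin that by (intro Min_le) auto
  have cpos: "0 < c"
  proof -
    have "c \<in> (\<lambda>r. Q r (Inl v0)) ` idx E" unfolding c_def using fin ne by (intro Min_in) auto
    then show ?thesis using Qpos by auto
  qed
  have stQ: "stoch (idx E) Q" unfolding Q_def by (rule stoch_Tp[OF loops])
  have v0I: "Inl v0 \<in> idx E" unfolding idx_def by auto
  have c1: "c \<le> 1"
  proof -
    obtain r where r: "r \<in> idx E" using ne by auto
    have "Q r (Inl v0) \<le> (\<Sum>b\<in>idx E. Q r b)"
      using stQ r v0I fin unfolding stoch_def by (intro member_le_sum) auto
    then show ?thesis using c_le[OF r] stQ r unfolding stoch_def by auto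
  qed
  have "\<forall>x a. (\<forall>t\<in>{1..L}. \<forall>e\<in>E. x (a+t) e) \<longrightarrow> sig (idx E) (Tp E x a L) \<le> 2 - 2 * c"
  proof (intro allI impI)
    fix x a assume g: "\<forall>t\<in>{1..L}. \<forall>e\<in>E. x (a+t) e"
    then have "Tp E x a L = Q" unfolding Q_def by (rule Tp_good)
    then show "sig (idx E) (Tp E x a L) \<le> 2 - 2 * c"
      using sig_stoch_le[OF fin ne stQ v0I c_le] by simp
  qed
  then show ?thesis using cpos c1 unfolding L_def by blast
qed

lemma sig_cong:
  assumes "\<And>a b. a \<in> I \<Longrightarrow> b \<in> I \<Longrightarrow> A a b = B a b"
  shows "sig I A = sig I B"
proof -
  have "(\<lambda>(i1,i2). \<Sum>j\<in>I. \<bar>A i1 j - A i2 j\<bar>) ` (I \<times> I) = (\<lambda>(i1,i2). \<Sum>j\<in>I. \<bar>B i1 j - B i2 j\<bar>) ` (I \<times> I)"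
    using assms by (intro image_cong) (auto intro!: sum.cong)
  then show ?thesis unfolding sig_def by simp
qed

lemma det_conv:
  fixes E :: "('v::finite \<times> 'v) set"
  assumes loops: "\<forall>i. (i, i) \<in> E"
    and L: "0 < L" and c: "0 < c" "c \<le> 1"
    and good: "\<forall>x a. (\<forall>t\<in>{1..L}. \<forall>e\<in>E. x (a+t) e) \<longrightarrow> sig (idx E) (Tp E x a L) \<le> 2 - 2 * c"
    and inf: "\<forall>n. \<exists>m\<ge>n. \<forall>t\<in>{1..L}. \<forall>e\<in>E. x (m*L+t) e"
  shows "(\<lambda>k. delta (idx E) (Tprod E x k)) \<longlonglongrightarrow> 0"
proof -
  define I where "I = idx E"
  have fin: "finite I" unfolding I_def by simp
  have ne: "I \<noteq> {}" unfolding I_def idx_def by auto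
  define s where "s k = sig I (Tp E x 0 k)" for k
  have st: "stoch I (Tp E x a n)" for a n unfolding I_def by (rule stoch_Tp[OF loops])
  have s0: "0 \<le> s k" for k unfolding s_def by (rule sig_nonneg[OF fin ne])
  have sdec: "s (Suc k) \<le> s k" for k
  proof -
    have "s (Suc k) \<le> s k * sig I (Mmat E (x (Suc k))) / 2"
      unfolding s_def I_def using sig_mult[OF fin[unfolded I_def] ne[unfolded I_def] st[unfolded I_def]]
      by simp
    also have "\<dots> \<le> s k * 2 / 2"
      using sig_stoch_le2[OF fin ne stoch_Mmat[OF loops, folded I_def]] s0[of k]
      by (intro divide_right_mono mult_left_mono) auto
    finally show ?thesis by simp
  qed
  have mono: "s k' \<le> s k" if "k \<le> k'" for k k'
    using that
  proof (induction k' rule: dec_induct)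
    case base then show ?case by simp
  next
    case (step m) then show ?case using sdec[of m] by linarith
  qed
  have sgood: "s (m*L + L) \<le> (1 - c) * s (m*L)" if g: "\<forall>t\<in>{1..L}. \<forall>e\<in>E. x (m*L+t) e" for m
  proof -
    have "s (m*L + L) = sig I (mat_mult I (Tp E x 0 (m*L)) (Tp E x (m*L) L))"
      unfolding s_def I_def
    proof (intro sig_cong)
      fix a b assume "a \<in> idx E" "b \<in> idx E"
      then show "Tp E x 0 (m*L + L) a b = mat_mult (idx E) (Tp E x 0 (m * L)) (Tp E x (m * L) L) a b"
        using Tp_split[where a=0 and b="m*L" and n=L and x=x and E=E and r=a and c=b] by simp
    qed
    also have "\<dots> \<le> s (m*L) * sig I (Tp E x (m*L) L) / 2"
      unfolding s_def by (rule sig_mult[OF fin ne st])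
    also have "\<dots> \<le> s (m*L) * (2 - 2*c) / 2"
      using good g s0[of "m*L"] unfolding I_def
      by (intro divide_right_mono mult_left_mono) auto
    also have "\<dots> = (1 - c) * s (m*L)" by (simp add: field_simps)
    finally show ?thesis .
  qed
  have pw: "\<exists>K. s K \<le> 2 * (1 - c) ^ j" for j
  proof (induction j)
    case 0
    have "s 0 \<le> 2" unfolding s_def by (rule sig_stoch_le2[OF fin ne st])
    then show ?case by auto
  next
    case (Suc j)
    then obtain K where K: "s K \<le> 2 * (1 - c) ^ j" by auto
    obtain m where m: "m \<ge> K" "\<forall>t\<in>{1..L}. \<forall>e\<in>E. x (m*L+t) e" using inf by blast
    have "m \<le> m*L" using L by simp
    then have "K \<le> m*L" using m(1) by linarith
    have "s (m*L + L) \<le> (1 - c) * s (m*L)" by (rule sgood[OF m(2)])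
    also have "\<dots> \<le> (1 - c) * s K" using mono[OF \<open>K \<le> m*L\<close>] c by (intro mult_left_mono) auto
    also have "\<dots> \<le> (1 - c) * (2 * (1 - c) ^ j)" using K c by (intro mult_left_mono) auto
    also have "\<dots> = 2 * (1 - c) ^ Suc j" by simp
    finally show ?case by blast
  qed
  have lim0: "(\<lambda>j. 2 * (1 - c) ^ j) \<longlonglongrightarrow> 0"
    using c by (intro tendsto_mult_right_zero LIMSEQ_power_zero) auto
  have "s \<longlonglongrightarrow> 0"
  proof (rule LIMSEQ_I)
    fix r :: real assume r: "0 < r"
    from LIMSEQ_D[OF lim0 r] obtain j where "\<forall>n\<ge>j. norm (2 * (1 - c) ^ n - 0) < r" by blast
    then have j: "\<bar>2 * (1 - c) ^ j\<bar> < r" by auto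
    obtain K where K: "s K \<le> 2 * (1 - c) ^ j" using pw by blast
    have "norm (s k - 0) < r" if "k \<ge> K" for k
      using mono[OF that] K j s0[of k] by auto
    then show "\<exists>no. \<forall>n\<ge>no. norm (s n - 0) < r" by blast
  qed
  show ?thesis
  proof (rule tendsto_sandwich[of "\<lambda>_. 0" _ _ s])
    show "\<forall>\<^sub>F n in sequentially. 0 \<le> delta (idx E) (Tprod E x n)"
      using delta_nonneg[OF fin ne] unfolding I_def by auto
    show "\<forall>\<^sub>F n in sequentially. delta (idx E) (Tprod E x n) \<le> s n"
      using delta_le_sig[OF fin ne] unfolding I_def s_def by (auto simp: Tprod_Tp)
  qed (auto simp: \<open>s \<longlonglongrightarrow> 0\<close>)
qed

theorem lemma3:
  fixes E :: "('v::finite \<times> 'v) set"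
    and q :: "'v \<times> 'v \<Rightarrow> real"
    and P :: "'w measure"
    and X :: "nat \<Rightarrow> 'v \<times> 'v \<Rightarrow> 'w \<Rightarrow> bool"
  assumes "prob_space P"
    and self_loops: "\<forall>i. (i, i) \<in> E"
    and strongly_connected: "\<forall>i j. (i, j) \<in> E\<^sup>+"
    and q_range: "\<forall>e\<in>E. 0 < q e \<and> q e \<le> 1"
    and indep: "prob_space.indep_vars P (\<lambda>_. count_space UNIV)
                  (\<lambda>(k, e). X k e) {(k, e). 1 \<le> k \<and> e \<in> E}"
    and reliable_prob: "\<forall>k\<ge>1. \<forall>e\<in>E. measure P {\<omega> \<in> space P. X k e \<omega>} = q e"
  shows "AE \<omega> in P. (\<lambda>k. delta (idx E) (Tprod E (\<lambda>k e. X k e \<omega>) k)) \<longlonglongrightarrow> 0"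
proof -
  interpret prob_space P by fact
  obtain L c where L: "0 < L" and c: "0 < c" "c \<le> 1"
    and good: "\<forall>x a. (\<forall>t\<in>{1..L}. \<forall>e\<in>E. x (a+t) e) \<longrightarrow> sig (idx E) (Tp E x a L) \<le> 2 - 2 * c"
    using good_block_exists[OF self_loops strongly_connected] by blast
  define Xp where "Xp = (\<lambda>(k, e). X k e)"
  define J where "J n = {n*L<..n*L+L} \<times> E" for n
  have finJ: "finite (J n)" for n unfolding J_def by simp
  have JI: "J n \<subseteq> {(k, e). 1 \<le> k \<and> e \<in> E}" for n unfolding J_def by auto
  have disj: "disjoint_family_on J UNIV"
    unfolding disjoint_family_on_def
  proof (intro ballI impI)
    fix n m :: nat assume "n \<noteq> m"
    show "J n \<inter> J m = {}"
    proof (rule ccontr)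
      assume "J n \<inter> J m \<noteq> {}"
      then obtain k e where k: "n*L < k" "k \<le> n*L+L" "m*L < k" "k \<le> m*L+L" unfolding J_def by auto
      show False
      proof (cases "n < m")
        case True
        then have "Suc n * L \<le> m * L" by (intro mult_le_mono1) auto
        then show False using k by simp
      next
        case False
        then have "m < n" using \<open>n \<noteq> m\<close> by auto
        then have "Suc m * L \<le> n * L" by (intro mult_le_mono1) auto
        then show False using k by simp
      qed
    qed
  qed
  have ind2: "indep_vars (\<lambda>n. PiM (J n) (\<lambda>_. count_space UNIV)) (\<lambda>n \<omega>. restrict (\<lambda>i. Xp i \<omega>) (J n)) UNIV"
    unfolding Xp_def by (rule indep_vars_restrict[OF indep JI disj])
  define G where "G n = {\<omega>\<in>space P. \<forall>i\<in>J n. restrict (\<lambda>i. Xp i \<omega>) (J n) i}" for n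
  have indG: "indep_events G UNIV"
    unfolding G_def
  proof (rule indep_eventsI_indep_vars[OF ind2])
    fix n
    have "{f \<in> space (PiM (J n) (\<lambda>_. count_space UNIV)). \<forall>i\<in>J n. f i} = PiE (J n) (\<lambda>_. {True})"
      by (auto simp: space_PiM PiE_iff extensional_def fun_eq_iff)
    also have "\<dots> \<in> sets (PiM (J n) (\<lambda>_. count_space UNIV))"
      using finJ by (intro sets_PiM_I_finite) auto
    finally show "{f \<in> space (PiM (J n) (\<lambda>_. count_space (UNIV::bool set))). \<forall>i\<in>J n. f i} \<in> sets (PiM (J n) (\<lambda>_. count_space UNIV))" .
  qed
  have Gev: "G n \<in> events" for n using indG unfolding indep_events_def by auto
  define p where "p = (\<Prod>e\<in>E. q e) ^ L"
  have ppos: "0 < p" unfolding p_def using q_range by (intro zero_less_power prod_pos) auto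
  have probG: "prob (G n) = p" for n
  proof -
    have Jne: "J n \<noteq> {}" unfolding J_def using L self_loops by auto
    have "G n = (\<Inter>i\<in>J n. Xp i -` {True} \<inter> space P)"
      unfolding G_def using Jne by auto
    then have "prob (G n) = (\<Prod>i\<in>J n. prob (Xp i -` {True} \<inter> space P))"
      using indep_varsD[OF indep[folded Xp_def] Jne finJ JI, of "\<lambda>_. {True}"] by simp
    also have "\<dots> = (\<Prod>i\<in>J n. q (snd i))"
    proof (rule prod.cong)
      fix i assume i: "i \<in> J n"
      then obtain k e where ke: "i = (k, e)" "1 \<le> k" "e \<in> E" using JI by blast
      have "Xp i -` {True} \<inter> space P = {\<omega> \<in> space P. X k e \<omega>}" unfolding Xp_def ke by auto
      then show "prob (Xp i -` {True} \<inter> space P) = q (snd i)" using reliable_prob ke by simp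
    qed simp
    also have "\<dots> = (\<Prod>k\<in>{n*L<..n*L+L}. \<Prod>e\<in>E. q e)"
      unfolding J_def by (subst prod.cartesian_product) (simp add: split_beta)
    also have "\<dots> = p" unfolding p_def by simp
    finally show ?thesis .
  qed
  define U where "U n = (\<Union>m\<in>{n..}. G m)" for n
  have Uev: "U n \<in> events" for n unfolding U_def by (intro sets.countable_UN'') (auto simp: Gev)
  have "(\<lambda>n. prob (U n)) \<longlonglongrightarrow> prob (\<Inter>n. U n)"
  proof (rule finite_Lim_measure_decseq)
    show "range U \<subseteq> events" using Uev by auto
    show "decseq U" unfolding decseq_def U_def by (auto intro: order_trans)
  qed
  moreover have "p \<le> prob (U n)" for n
  proof -
    have "prob (G n) \<le> prob (U n)" using Uev unfolding U_def by (intro finite_measure_mono) auto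
    then show ?thesis using probG by simp
  qed
  ultimately have "p \<le> prob (\<Inter>n. U n)" by (intro LIMSEQ_le_const) auto
  then have "prob (\<Inter>n. U n) \<noteq> 0" using ppos by auto
  then have "prob (\<Inter>n. U n) = 1" using borel_0_1_law[OF indG] unfolding U_def by auto
  then have AEU: "AE \<omega> in P. \<omega> \<in> (\<Inter>n. U n)" by (rule AE_prob_1)
  show ?thesis
    using AEU
  proof (rule eventually_mono)
    fix \<omega> assume w: "\<omega> \<in> (\<Inter>n. U n)"
    show "(\<lambda>k. delta (idx E) (Tprod E (\<lambda>k e. X k e \<omega>) k)) \<longlonglongrightarrow> 0"
    proof (rule det_conv[OF self_loops L c good])
      show "\<forall>n. \<exists>m\<ge>n. \<forall>t\<in>{1..L}. \<forall>e\<in>E. X (m*L+t) e \<omega>"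
      proof
        fix n
        from w obtain m where m: "m \<ge> n" "\<omega> \<in> G m" unfolding U_def by auto
        have "\<forall>t\<in>{1..L}. \<forall>e\<in>E. X (m*L+t) e \<omega>"
        proof (intro ballI)
          fix t e assume t: "t \<in> {1..L}" and e: "e \<in> E"
          then have "(m*L+t, e) \<in> J m" unfolding J_def by auto
          then show "X (m*L+t) e \<omega>" using m(2) unfolding G_def Xp_def by auto
        qed
        then show "\<exists>m\<ge>n. \<forall>t\<in>{1..L}. \<forall>e\<in>E. X (m*L+t) e \<omega>" using m(1) by blast
      qed
    qed
  qed
qed

end
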